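(* Let $\ell$ be a positive integer and $a_1,\dots,a_\ell,b,c$ positive integers, and put $\vec k_1=(a_1,\dots,a_\ell,b)$ and $\vec k_2=(a_1,\dots,a_\ell,c)$. Then $\widetilde{C}_{\vec k_1}(q,t)=\widetilde{C}_{\vec k_2}(q,t)$, where $\widetilde{C}_{\vec k}(q,t)=\sum_{\pi\in\mathcal D_{\vec k}}q^{\mathrm{area}(\pi)}t^{\mathrm{depth}(\pi)}$.
   Context: For $\vec k=(k_1,\dots,k_m)$ put $|\vec k|=\sum k_i$, $N=|\vec k|+m$. A $\vec k$-Dyck path is a word $\pi=\pi_1\cdots\pi_N$ containing the letters $S^{k_1},\dots,S^{k_m}$ exactly once each and in this order, together with $|\vec k|$ letters $W$, such that all starting ranks are nonnegative, where $r_1=0$, $r_{i+1}=r_i+k_j$ if $\pi_i=S^{k_j}$ and $r_{i+1}=r_i-1$ if $\pi_i=W$. $\mathcal D_{\vec k}$ is the set of such paths. $\mathrm{area}(\pi)=\sum_j a_j$ where $a_j$ is the starting rank of $S^{k_j}$. Filling algorithm $\eta_*$: in a tableau of $m$ top-justified columns, column $i$ having $k_i+1$ cells, place $1$ at the top of column 1; for $i=2,\dots,N$, call an entry active if it is currently the bottom entry of a column $i'$ not yet containing $k_{i'}+1$ entries; if $\pi_i=W$ place $i$ immediately below the largest active entry, otherwise place $i$ at the top of the first empty column. Ranking algorithm $\gamma_*$: column 1 gets ranks $0,\dots,k_1$ top to bottom; for $i\ge2$, if the top entry of column $i$ of $\eta_*(\pi)$ is $A+1$ and $A$ has rank $\alpha$,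 column $i$ gets ranks $\alpha,\dots,\alpha+k_i$ top to bottom. $\mathrm{depth}(\pi)$ is the sum of the first-row ranks. *)

theory Defs
  imports "HOL-Computational_Algebra.Polynomial"
begin

text \<open>Letters of a k-Dyck path: S j stands for the letter S^{k_{j+1}} (0-indexed
  column j), W is a west step.  A vector k is a list of naturals, m = length k.\<close>

datatype letter = S nat | W

fun step_rank :: "nat list \<Rightarrow> letter \<Rightarrow> int" where
  "step_rank k (S j) = int (k ! j)"
| "step_rank k W = -1"

text \<open>Rank reached after reading the word w, starting from rank 0.
  The starting rank r_{i+1} of the (i+1)-st letter (1-based) is rank_of k (take i w).\<close>
definition rank_of :: "nat list \<Rightarrow> letter list \<Rightarrow> int" where
  "rank_of k w = sum_list (map (step_rank k) w)"

definition is_S :: "letter \<Rightarrow> bool" where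
  "is_S x = (x \<noteq> W)"

definition dyck_paths :: "nat list \<Rightarrow> letter list set" where
  "dyck_paths k = {\<pi>. filter is_S \<pi> = map S [0..<length k]
      \<and> length (filter (\<lambda>x. x = W) \<pi>) = sum_list k
      \<and> (\<forall>i < length \<pi>. rank_of k (take i \<pi>) \<ge> 0)}"

definition area :: "nat list \<Rightarrow> letter list \<Rightarrow> nat" where
  "area k \<pi> = (\<Sum>i\<in>{i. i < length \<pi> \<and> is_S (\<pi> ! i)}. nat (rank_of k (take i \<pi>)))"

text \<open>Filling algorithm. A tableau is a list of m columns, each a list of entries read
  top to bottom.  Column j (0-indexed) has capacity k!j + 1.\<close>
definition active_cols :: "nat list \<Rightarrow> nat list list \<Rightarrow> nat set" where
  "active_cols k T = {j. j < length k \<and> T ! j \<noteq> [] \<and> length (T ! j) < k ! j + 1}"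

fun fill_step :: "nat list \<Rightarrow> nat list list \<Rightarrow> nat \<times> letter \<Rightarrow> nat list list" where
  "fill_step k T (i, W) =
     (let M = Max ((\<lambda>j. last (T ! j)) ` active_cols k T);
          j = (SOME j. j \<in> active_cols k T \<and> last (T ! j) = M)
      in T[j := T ! j @ [i]])"
| "fill_step k T (i, S _) =
     (let j = (LEAST j. j < length k \<and> T ! j = []) in T[j := [i]])"

definition fill :: "nat list \<Rightarrow> letter list \<Rightarrow> nat list list" where
  "fill k \<pi> = foldl (fill_step k) ((replicate (length k) [])[0 := [1]])
                 (zip [2..<length \<pi> + 1] (tl \<pi>))"

text \<open>Ranking algorithm: ranks of the top entries of columns 0..i-1.  Column 0 starts
  at rank 0; column i (i>0) with top entry A+1 starts at the rank of A, where A sits in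
  an earlier column j at position p (0-based from the top), whose rank is
  (top rank of column j) + p.\<close>
fun col_ranks :: "nat list list \<Rightarrow> nat \<Rightarrow> nat list" where
  "col_ranks T 0 = []"
| "col_ranks T (Suc i) =
     (let rs = col_ranks T i in
      rs @ [if i = 0 then 0 else
              (let A = hd (T ! i) - 1;
                   j = (SOME j. j < i \<and> A \<in> set (T ! j));
                   p = (LEAST p. p < length (T ! j) \<and> T ! j ! p = A)
               in rs ! j + p)])"

definition depth :: "nat list \<Rightarrow> letter list \<Rightarrow> nat" where
  "depth k \<pi> = sum_list (col_ranks (fill k \<pi>) (length k))"

text \<open>C~_k(q,t) as a bivariate polynomial: outer variable q, inner variable t.\<close>
definition Ctilde :: "nat list \<Rightarrow> int poly poly" where
  "Ctilde k = (\<Sum>\<pi>\<in>dyck_paths k. monom (monom 1 (depth k \<pi>)) (area k \<pi>))"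

end

theory Submission
  imports Defs
begin

lemma nth_oob_eq:
  "length xs = length ys \<Longrightarrow> length xs \<le> n \<Longrightarrow> xs ! n = ys ! n"
proof (induction xs arbitrary: ys n)
  case Nil then show ?case by simp
next
  case (Cons x xs)
  then obtain y ys' where ys: "ys = y # ys'" by (cases ys) auto
  from Cons.prems obtain n' where n: "n = Suc n'" by (cases n) auto
  show ?case using Cons.IH[of ys' n'] Cons.prems ys n by simp
qed

lemma fill_snoc:
  assumes "w \<noteq> []"
  shows "fill k (w @ [x]) = fill_step k (fill k w) (Suc (length w), x)"
proof -
  have u: "[2..<length w + 2] = [2..<length w + 1] @ [length w + 1]"
    using assms by (cases w) (auto simp: upt_Suc_append)
  have t: "tl (w @ [x]) = tl w @ [x]" using assms by (cases w) auto
  have l: "length [2..<length w + 1] = length (tl w)" by (cases "length w") auto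
  show ?thesis unfolding fill_def
    using u t zip_append[OF l, of "[length w + 1]" "[x]"] by simp
qed

lemma fill_single: "fill k [x] = (replicate (length k) [])[0 := [1]]"
  by (simp add: fill_def)

lemma fill_step_W_ex: "\<exists>j. fill_step k T (i, W) = T[j := T ! j @ [i]]"
  by (simp add: Let_def) (rule exI, rule refl)

lemma rank_of_append: "rank_of k (u @ v) = rank_of k u + rank_of k v"
  by (simp add: rank_of_def)

lemma rank_of_single[simp]: "rank_of k [x] = step_rank k x"
  by (simp add: rank_of_def)

lemma rank_of_Cons[simp]: "rank_of k (y # w) = step_rank k y + rank_of k w"
  by (simp add: rank_of_def)

lemma rank_of_Nil[simp]: "rank_of k [] = 0"
  by (simp add: rank_of_def)

lemma rank_of_rep: "rank_of k (replicate j W) = - int j"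
  by (induction j) (auto simp: rank_of_def)

lemma rank_of_formula:
  "rank_of k w = int (sum_list (map (\<lambda>x. case x of S j \<Rightarrow> k ! j | W \<Rightarrow> 0) (filter is_S w)))
     - int (length (filter (\<lambda>x. x = W) w))"
proof (induction w)
  case Nil then show ?case by (simp add: rank_of_def)
next
  case (Cons x w)
  then show ?case by (cases x) (auto simp: rank_of_def is_S_def)
qed

lemma rank_of_app_k:
  "(\<forall>j. S j \<in> set w \<longrightarrow> j < length as) \<Longrightarrow> rank_of (as @ [x]) w = rank_of as w"
proof (induction w)
  case Nil then show ?case by simp
next
  case (Cons y w)
  then show ?case by (cases y) (auto simp: rank_of_def nth_append)
qed

lemma filt_take:
  assumes "filter is_S \<pi> = map S [0..<m]"
  shows "filter is_S (take t \<pi>) = map S [0..<length (filter is_S (take t \<pi>))]"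
proof -
  have "filter is_S \<pi> = filter is_S (take t \<pi>) @ filter is_S (drop t \<pi>)"
    by (metis append_take_drop_id filter_append)
  then have "filter is_S (take t \<pi>) = take (length (filter is_S (take t \<pi>))) (map S [0..<m])"
    using assms by (metis append_eq_conv_conj)
  moreover have "length (filter is_S (take t \<pi>)) \<le> m"
    using \<open>filter is_S \<pi> = _ @ _\<close> assms
    by (metis le_add1 length_append length_map length_upt minus_nat.diff_0)
  ultimately show ?thesis by (simp add: take_map min_def)
qed

definition finv :: "nat list \<Rightarrow> letter list \<Rightarrow> nat list list \<Rightarrow> bool" where
  "finv k w T \<longleftrightarrow>
   length T = length k \<and> length (filter is_S w) \<le> length k \<and>
   (\<forall>j<length k. (T ! j \<noteq> []) = (j < length (filter is_S w))) \<and>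
   (\<forall>j<length k. length (T ! j) \<le> Suc (k ! j)) \<and>
   int (\<Sum>j<length (filter is_S w). length (T ! j)) + rank_of k w
      = int (\<Sum>j<length (filter is_S w). Suc (k ! j)) \<and>
   (\<forall>j<length k. \<forall>x\<in>set (T ! j). x \<le> length w)"

lemma sum_update:
  assumes "j1 < s" "s \<le> length T"
  shows "(\<Sum>j<s. f (T[j1 := v] ! j)) + f (T ! j1) = (\<Sum>j<s. f (T ! j)) + (f v :: nat)"
proof -
  have "(\<Sum>j<s. f (T[j1 := v] ! j)) = f v + (\<Sum>j\<in>{..<s} - {j1}. f (T[j1 := v] ! j))"
    using assms by (subst sum.remove[of _ j1]) auto
  moreover have "(\<Sum>j<s. f (T ! j)) = f (T ! j1) + (\<Sum>j\<in>{..<s} - {j1}. f (T ! j))"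
    using assms by (subst sum.remove[of _ j1]) auto
  moreover have "(\<Sum>j\<in>{..<s} - {j1}. f (T[j1 := v] ! j)) = (\<Sum>j\<in>{..<s} - {j1}. f (T ! j))"
    by (rule sum.cong) auto
  ultimately show ?thesis by simp
qed

lemma step_W:
  assumes I: "finv k w T" and r: "rank_of k w \<ge> 1"
  shows "finv k (w @ [W]) (fill_step k T (Suc (length w), W))"
proof -
  define s where "s = length (filter is_S w)"
  have s': "length (filter is_S (w @ [W])) = s" by (simp add: s_def is_S_def)
  have ex: "\<exists>j<s. length (T ! j) < Suc (k ! j)"
  proof (rule ccontr)
    assume "\<not> ?thesis"
    then have "(\<Sum>j<s. Suc (k ! j)) \<le> (\<Sum>j<s. length (T ! j))"
      by (intro sum_mono) (simp, meson not_le)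
    then show False using I r unfolding finv_def s_def[symmetric] by linarith
  qed
  then obtain j0 where j0: "j0 < s" "length (T ! j0) < Suc (k ! j0)" by blast
  define A where "A = active_cols k T"
  have sk: "s \<le> length k" using I by (simp add: finv_def s_def)
  have j0A: "j0 \<in> A" using j0 I sk unfolding A_def active_cols_def finv_def s_def[symmetric] by auto
  have finA: "finite A" unfolding A_def active_cols_def by auto
  define M where "M = Max ((\<lambda>j. last (T ! j)) ` A)"
  have "M \<in> (\<lambda>j. last (T ! j)) ` A" unfolding M_def using finA j0A by (intro Max_in) auto
  then have exM: "\<exists>j. j \<in> A \<and> last (T ! j) = M" by auto
  define j1 where "j1 = (SOME j. j \<in> A \<and> last (T ! j) = M)"
  have j1A: "j1 \<in> A" unfolding j1_def using someI_ex[OF exM] by blast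
  have fs: "fill_step k T (Suc (length w), W) = T[j1 := T ! j1 @ [Suc (length w)]]"
    by (simp add: Let_def j1_def M_def A_def)
  have j1: "j1 < length k" "T ! j1 \<noteq> []" "length (T ! j1) < Suc (k ! j1)"
    using j1A unfolding A_def active_cols_def by auto
  have j1s: "j1 < s" using j1 I unfolding finv_def s_def[symmetric] by auto
  have lT: "length T = length k" using I by (simp add: finv_def)
  have su: "(\<Sum>j<s. length (T[j1 := T ! j1 @ [Suc (length w)]] ! j)) + length (T ! j1)
      = (\<Sum>j<s. length (T ! j)) + length (T ! j1 @ [Suc (length w)])"
    using sum_update[OF j1s, of T length] sk lT by simp
  have rk: "rank_of k (w @ [W]) = rank_of k w - 1" by (simp add: rank_of_append)
  have ent: "\<forall>j<length k. \<forall>x\<in>set (T ! j). x \<le> Suc (length w)"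
    using I unfolding finv_def by (meson le_SucI)
  have ent1: "\<forall>x\<in>set (T ! j1). x \<le> Suc (length w)" using ent j1 by auto
  show ?thesis unfolding fs finv_def s'
    using I j1 lT su rk ent unfolding finv_def s_def[symmetric]
    by (auto simp: nth_list_update dest: bspec[OF ent1])
qed

lemma step_S:
  assumes I: "finv k w T" and s: "s = length (filter is_S w)" and sk: "s < length k"
  shows "finv k (w @ [S s]) (fill_step k T (Suc (length w), S s))"
proof -
  have lT: "length T = length k" using I by (simp add: finv_def)
  have ne: "\<forall>j<length k. (T ! j \<noteq> []) = (j < s)" using I s by (simp add: finv_def)
  have L: "(LEAST j. j < length k \<and> T ! j = []) = s"
    by (rule Least_equality) (use ne sk in auto)
  have fs: "fill_step k T (Suc (length w), S s) = T[s := [Suc (length w)]]"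
    by (simp add: L)
  have s': "length (filter is_S (w @ [S s])) = Suc s" by (simp add: s is_S_def)
  have su1: "(\<Sum>j<Suc s. length (T[s := [Suc (length w)]] ! j)) = Suc (\<Sum>j<s. length (T ! j))"
  proof -
    have "(\<Sum>j<s. length (T[s := [Suc (length w)]] ! j)) = (\<Sum>j<s. length (T ! j))"
      by (rule sum.cong) auto
    then show ?thesis using lT sk by simp
  qed
  have rk: "rank_of k (w @ [S s]) = rank_of k w + int (k ! s)" by (simp add: rank_of_append)
  have ent: "\<forall>j<length k. \<forall>x\<in>set (T ! j). x \<le> Suc (length w)"
    using I unfolding finv_def by (meson le_SucI)
  show ?thesis unfolding fs finv_def s'
    using I lT su1 rk ent sk unfolding finv_def s[symmetric]
    by (auto simp: nth_list_update)
qed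

lemma base_inv:
  assumes "length k \<ge> 1"
  shows "finv k [S 0] (fill k [S 0])"
proof -
  have "0 < length k" using assms by linarith
  then show ?thesis unfolding finv_def fill_single
    by (auto simp: is_S_def nth_list_update Suc_le_eq split: if_splits)
qed

lemma filt_take_len:
  "length (filter P (take t xs)) \<le> length (filter P xs)"
  by (metis append_take_drop_id filter_append le_add1 length_append)

lemma dyck_filter: "\<pi> \<in> dyck_paths k \<Longrightarrow> filter is_S \<pi> = map S [0..<length k]"
  by (simp add: dyck_paths_def)

lemma dyck_rank: "\<pi> \<in> dyck_paths k \<Longrightarrow> i < length \<pi> \<Longrightarrow> rank_of k (take i \<pi>) \<ge> 0"
  by (simp add: dyck_paths_def)

lemma inv_path:
  assumes D: "\<pi> \<in> dyck_paths k" and t1: "1 \<le> t" and tl: "t < length \<pi>"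
  shows "finv k (take t \<pi>) (fill k (take t \<pi>))"
  using t1 tl
proof (induction t rule: nat_induct_at_least)
  case base
  have ne: "\<pi> \<noteq> []" using base by auto
  have t1: "take 1 \<pi> = [\<pi> ! 0]" using ne by (cases \<pi>) auto
  have "rank_of k (take 1 \<pi>) \<ge> 0" using dyck_rank[OF D base] .
  then have "is_S (\<pi> ! 0)" using t1 by (cases "\<pi> ! 0") (auto simp: is_S_def)
  then obtain j where j: "\<pi> ! 0 = S j" by (cases "\<pi> ! 0") (auto simp: is_S_def)
  have F: "filter is_S (take 1 \<pi>) = map S [0..<length (filter is_S (take 1 \<pi>))]"
    using filt_take[OF dyck_filter[OF D]] .
  then have "j = 0" using t1 j by (simp add: is_S_def)
  moreover have "length k \<ge> 1"
    using filt_take_len[of is_S 1 \<pi>] dyck_filter[OF D] t1 j by (simp add: is_S_def)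
  ultimately show ?case using base_inv t1 j by simp
next
  case (Suc t)
  have IH: "finv k (take t \<pi>) (fill k (take t \<pi>))" using Suc by simp
  have tk: "take (Suc t) \<pi> = take t \<pi> @ [\<pi> ! t]" using Suc by (simp add: take_Suc_conv_app_nth)
  have ne: "take t \<pi> \<noteq> []" using Suc by auto
  have lt: "length (take t \<pi>) = t" using Suc by simp
  have fs: "fill k (take (Suc t) \<pi>) = fill_step k (fill k (take t \<pi>)) (Suc t, \<pi> ! t)"
    using fill_snoc[OF ne] tk lt by simp
  show ?case
  proof (cases "\<pi> ! t")
    case W
    have "rank_of k (take (Suc t) \<pi>) \<ge> 0" using dyck_rank[OF D Suc.prems] .
    then have "rank_of k (take t \<pi>) \<ge> 1" using tk W by (simp add: rank_of_append)
    from step_W[OF IH this] show ?thesis using fs tk W lt by simp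
  next
    case (S j)
    define s where "s = length (filter is_S (take t \<pi>))"
    have F1: "filter is_S (take t \<pi>) = map S [0..<s]"
      using filt_take[OF dyck_filter[OF D]] s_def by simp
    have F2: "filter is_S (take (Suc t) \<pi>) = map S [0..<length (filter is_S (take (Suc t) \<pi>))]"
      using filt_take[OF dyck_filter[OF D]] .
    have "map S [0..<s] @ [S j] = map S [0..<Suc s]"
      using F1 F2 tk S by (simp add: is_S_def)
    then have js: "j = s" by simp
    have "Suc s \<le> length k"
      using filt_take_len[of is_S "Suc t" \<pi>] dyck_filter[OF D] tk S F1 by (simp add: is_S_def)
    then have "s < length k" by simp
    from step_S[OF IH s_def this] show ?thesis using fs tk S js lt by simp
  qed
qed

definition ext_by :: "nat \<Rightarrow> nat list list \<Rightarrow> nat list list \<Rightarrow> bool" where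
  "ext_by n T T' \<longleftrightarrow> length T' = length T \<and>
     (\<forall>j<length T. \<exists>X. T' ! j = T ! j @ X \<and> (\<forall>x\<in>set X. n < x))"

lemma ext_suffix:
  assumes "u \<noteq> []"
  shows "ext_by (length u) (fill k u) (fill k (u @ replicate r W))"
proof (induction r)
  case 0
  show ?case unfolding ext_by_def by auto
next
  case (Suc r)
  define T' where "T' = fill k (u @ replicate r W)"
  have eq: "u @ replicate (Suc r) W = (u @ replicate r W) @ [W]"
    by (simp add: replicate_append_same)
  have "fill k (u @ replicate (Suc r) W) = fill_step k T' (Suc (length u + r), W)"
    unfolding eq T'_def using fill_snoc[of "u @ replicate r W" k W] assms by simp
  moreover obtain j where "fill_step k T' (Suc (length u + r), W) = T'[j := T' ! j @ [Suc (length u + r)]]"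
    using fill_step_W_ex by blast
  ultimately have F: "fill k (u @ replicate (Suc r) W) = T'[j := T' ! j @ [Suc (length u + r)]]" by simp
  have IH: "ext_by (length u) (fill k u) T'" using Suc T'_def by simp
  show ?case unfolding F ext_by_def
  proof (intro conjI allI impI)
    show "length (T'[j := T' ! j @ [Suc (length u + r)]]) = length (fill k u)"
      using IH by (simp add: ext_by_def)
  next
    fix j' assume j': "j' < length (fill k u)"
    then obtain X where X: "T' ! j' = fill k u ! j' @ X" "\<forall>x\<in>set X. length u < x"
      using IH unfolding ext_by_def by blast
    show "\<exists>X. T'[j := T' ! j @ [Suc (length u + r)]] ! j' = fill k u ! j' @ X \<and> (\<forall>x\<in>set X. length u < x)"
    proof (cases "j = j'")
      case True
      then show ?thesis using X j' IH
        by (intro exI[of _ "X @ [Suc (length u + r)]"]) (auto simp: ext_by_def)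
    next
      case False
      then show ?thesis using X by (intro exI[of _ X]) auto
    qed
  qed
qed

lemma least_app_eq:
  fixes A :: nat
  assumes "\<forall>x\<in>set X. A < x"
  shows "(p < length (U @ X) \<and> (U @ X) ! p = A) = (p < length U \<and> U ! p = A)"
proof (cases "p < length U")
  case True then show ?thesis by (simp add: nth_append)
next
  case False
  have "\<not> (p < length (U @ X) \<and> (U @ X) ! p = A)"
  proof
    assume H: "p < length (U @ X) \<and> (U @ X) ! p = A"
    then have "X ! (p - length U) = A" "p - length U < length X"
      using False by (auto simp: nth_append)
    then have "A \<in> set X" by (metis nth_mem)
    with assms have "A < A" by blast
    then show False by simp
  qed
  then show ?thesis using False by simp
qed

lemma col_ranks_ext:
  assumes L: "length T0 = m" and NE: "\<forall>j<m. T0 ! j \<noteq> []"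
    and LE: "\<forall>j<m. \<forall>x\<in>set (T0 ! j). x \<le> n"
    and E1: "ext_by n T0 T1" and E2: "ext_by n T0 T2"
  shows "i \<le> m \<Longrightarrow> col_ranks T1 i = col_ranks T2 i"
proof (induction i)
  case 0 then show ?case by simp
next
  case (Suc i)
  have IH: "col_ranks T1 i = col_ranks T2 i" using Suc by simp
  have im: "i < m" using Suc by simp
  have l12: "length T1 = m" "length T2 = m" using E1 E2 L by (auto simp: ext_by_def)
  have extT: "\<And>j. j < m \<Longrightarrow> (\<exists>X. T1 ! j = T0 ! j @ X \<and> (\<forall>x\<in>set X. n < x)) \<and>
                                  (\<exists>X. T2 ! j = T0 ! j @ X \<and> (\<forall>x\<in>set X. n < x))"
    using E1 E2 L by (auto simp: ext_by_def)
  have hd: "hd (T1 ! i) = hd (T0 ! i)" "hd (T2 ! i) = hd (T0 ! i)"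
    using extT[OF im] NE im by auto
  define A where "A = hd (T0 ! i) - 1"
  have An: "A \<le> n"
  proof -
    have "hd (T0 ! i) \<in> set (T0 ! i)" using NE im by simp
    then have "hd (T0 ! i) \<le> n" using LE im by blast
    then show ?thesis using A_def by simp
  qed
  have P1: "(\<lambda>j. j < i \<and> A \<in> set (T1 ! j)) = (\<lambda>j. j < i \<and> A \<in> set (T2 ! j))"
  proof (rule ext, rule iffI)
    fix j assume "j < i \<and> A \<in> set (T1 ! j)"
    then show "j < i \<and> A \<in> set (T2 ! j)" using extT[of j] im An by fastforce
  next
    fix j assume "j < i \<and> A \<in> set (T2 ! j)"
    then show "j < i \<and> A \<in> set (T1 ! j)" using extT[of j] im An by fastforce
  qed
  have P2: "(\<lambda>p. p < length (T1 ! j) \<and> T1 ! j ! p = A) = (\<lambda>p. p < length (T2 ! j) \<and> T2 ! j ! p = A)"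
    for j
  proof (cases "j < m")
    case True
    then obtain X1 X2 where X: "T1 ! j = T0 ! j @ X1" "\<forall>x\<in>set X1. n < x"
        "T2 ! j = T0 ! j @ X2" "\<forall>x\<in>set X2. n < x" using extT by blast
    have a1: "\<forall>x\<in>set X1. A < x" "\<forall>x\<in>set X2. A < x" using X An by auto
    show ?thesis unfolding X(1,3) using least_app_eq[OF a1(1)] least_app_eq[OF a1(2)] by simp
  next
    case False
    then have "T1 ! j = T2 ! j" using nth_oob_eq[of T1 T2 j] l12 by simp
    then show ?thesis by simp
  qed
  show ?case using IH hd P1 P2 by (simp add: Let_def A_def)
qed

definition nW :: "letter list \<Rightarrow> nat" where
  "nW P = length (filter (\<lambda>x. x = W) P)"

definition Pref :: "nat list \<Rightarrow> letter list set" where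
  "Pref as = {P. filter is_S P = map S [0..<length as] \<and> nW P \<le> sum_list as \<and>
                 (\<forall>i \<le> length P. rank_of as (take i P) \<ge> 0)}"

definition fP :: "nat list \<Rightarrow> nat \<Rightarrow> letter list \<Rightarrow> letter list" where
  "fP as x P = P @ S (length as) # replicate (sum_list as + x - nW P) W"

lemma S_in_P:
  assumes "filter is_S P = map S [0..<l]" "S j \<in> set P"
  shows "j < l"
proof -
  have "S j \<in> set (filter is_S P)" using assms(2) by (simp add: is_S_def)
  then show ?thesis using assms(1) by auto
qed

lemma rank_P:
  assumes "filter is_S P = map S [0..<length as]"
  shows "rank_of as P = int (sum_list as) - int (nW P)"
proof -
  have "map ((\<lambda>x. case x of S j \<Rightarrow> as ! j | W \<Rightarrow> 0) \<circ> S) [0..<length as] = as"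
    by (simp add: o_def map_nth)
  then show ?thesis using assms rank_of_formula[of as P] by (simp add: nW_def)
qed

lemma rank_take_P:
  assumes "filter is_S P = map S [0..<length as]"
  shows "rank_of (as @ [x]) (take i P) = rank_of as (take i P)"
  by (rule rank_of_app_k) (meson S_in_P assms in_set_takeD)

lemma fP_in:
  assumes P: "P \<in> Pref as"
  shows "fP as x P \<in> dyck_paths (as @ [x])"
proof -
  define l where "l = length as"
  define R where "R = sum_list as + x - nW P"
  have F: "filter is_S P = map S [0..<l]" and nWle: "nW P \<le> sum_list as"
    and rk: "\<forall>i \<le> length P. rank_of as (take i P) \<ge> 0"
    using P by (auto simp: Pref_def l_def)
  have pi: "fP as x P = P @ S l # replicate R W" by (simp add: fP_def l_def R_def)
  have f1: "filter is_S (fP as x P) = map S [0..<length (as @ [x])]"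
    unfolding pi using F by (simp add: is_S_def l_def filter_replicate)
  have f2: "length (filter (\<lambda>y. y = W) (fP as x P)) = sum_list (as @ [x])"
    unfolding pi using nWle by (simp add: nW_def R_def)
  have rP: "rank_of (as @ [x]) P = int (sum_list as) - int (nW P)"
    using rank_take_P[of P as x "length P"] rank_P[of P as] F l_def by simp
  have f3: "rank_of (as @ [x]) (take i (fP as x P)) \<ge> 0" if i: "i < length (fP as x P)" for i
  proof (cases "i \<le> length P")
    case True
    then have "take i (fP as x P) = take i P" unfolding pi by simp
    then show ?thesis using rank_take_P[of P as x i] F l_def rk True by simp
  next
    case False
    then obtain j where j: "i = Suc (length P + j)" by (metis add_Suc_right less_imp_Suc_add not_le)
    have jR: "j < R" using i j unfolding pi by simp
    have "take i (fP as x P) = P @ [S l] @ replicate j W"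
      unfolding pi j using jR by simp
    then have "rank_of (as @ [x]) (take i (fP as x P)) = rank_of (as @ [x]) P + int x - int j"
      by (simp add: rank_of_append rank_of_rep l_def)
    then show ?thesis using rP jR nWle R_def by simp
  qed
  show ?thesis unfolding dyck_paths_def using f1 f2 f3 by blast
qed

lemma dyck_sub:
  assumes D: "\<pi> \<in> dyck_paths (as @ [x])"
  shows "\<pi> \<in> fP as x ` Pref as"
proof -
  define l where "l = length as"
  have F: "filter is_S \<pi> = map S [0..<Suc l]" using dyck_filter[OF D] l_def by simp
  then have "filter is_S (rev \<pi>) = S l # rev (map S [0..<l])" by (simp add: rev_filter[symmetric])
  from filter_eq_ConsD[OF this] obtain us vs where
    uv: "rev \<pi> = us @ S l # vs" "\<forall>u\<in>set us. \<not> is_S u" "rev (map S [0..<l]) = filter is_S vs"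
    by blast
  define P where "P = rev vs"
  define Q where "Q = rev us"
  have pi: "\<pi> = P @ S l # Q" unfolding P_def Q_def using uv(1)
    by (metis append.assoc append_Cons append_Nil rev.simps(2) rev_append rev_rev_ident)
  have FP: "filter is_S P = map S [0..<l]" unfolding P_def using uv(3)
    by (metis rev_filter rev_rev_ident)
  have QW: "Q = replicate (length Q) W"
  proof -
    have "\<forall>y\<in>set Q. y = W" unfolding Q_def using uv(2) by (auto simp: is_S_def)
    then show ?thesis by (simp add: replicate_length_same)
  qed
  have cnt: "nW P + length Q = sum_list as + x"
  proof -
    have "length (filter (\<lambda>y. y = W) \<pi>) = sum_list (as @ [x])" using D by (simp add: dyck_paths_def)
    moreover have "length (filter (\<lambda>y. y = W) Q) = length Q" by (subst QW) (simp add: filter_replicate)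
    ultimately show ?thesis unfolding pi nW_def by simp
  qed
  have rk: "rank_of as (take i P) \<ge> 0" if "i \<le> length P" for i
  proof -
    have "take i \<pi> = take i P" using that pi by simp
    moreover have "i < length \<pi>" using that pi by simp
    ultimately have "rank_of (as @ [x]) (take i P) \<ge> 0" using dyck_rank[OF D] by metis
    then show ?thesis using rank_take_P[of P as x i] FP l_def by simp
  qed
  have "nW P \<le> sum_list as" using rk[of "length P"] rank_P[of P as] FP l_def by simp
  then have PP: "P \<in> Pref as" using FP rk l_def by (simp add: Pref_def)
  have "\<pi> = fP as x P" unfolding fP_def pi l_def[symmetric] using cnt QW
    by (metis add_diff_cancel_left')
  then show ?thesis using PP by blast
qed

lemma dyck_char: "dyck_paths (as @ [x]) = fP as x ` Pref as"
  using dyck_sub fP_in by blast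

lemma fP_inj: "inj_on (fP as x) (Pref as)"
proof (rule inj_onI)
  fix P1 P2 assume P: "P1 \<in> Pref as" "P2 \<in> Pref as" and eq: "fP as x P1 = fP as x P2"
  have n1: "S (length as) \<notin> set P1" using P(1) S_in_P[of P1 "length as"] by (auto simp: Pref_def)
  have n2: "S (length as) \<notin> set (replicate (sum_list as + x - nW P1) W)" by simp
  show "P1 = P2" using eq append_Cons_eq_iff[OF n1 n2] by (simp add: fP_def)
qed

definition areaP :: "nat list \<Rightarrow> letter list \<Rightarrow> nat" where
  "areaP as P = (\<Sum>i\<in>{i. i \<le> length P \<and> is_S ((P @ [S (length as)]) ! i)}. nat (rank_of as (take i P)))"

lemma area_fP:
  assumes P: "P \<in> Pref as"
  shows "area (as @ [x]) (fP as x P) = areaP as P"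
proof -
  define l where "l = length as"
  define R where "R = sum_list as + x - nW P"
  have F: "filter is_S P = map S [0..<l]" using P by (simp add: Pref_def l_def)
  have pi: "fP as x P = P @ S l # replicate R W" by (simp add: fP_def l_def R_def)
  have set_eq: "{i. i < length (fP as x P) \<and> is_S (fP as x P ! i)}
      = {i. i \<le> length P \<and> is_S ((P @ [S l]) ! i)}"
  proof (rule set_eqI)
    fix i
    show "i \<in> {i. i < length (fP as x P) \<and> is_S (fP as x P ! i)} \<longleftrightarrow>
          i \<in> {i. i \<le> length P \<and> is_S ((P @ [S l]) ! i)}"
    proof (cases "i < length P")
      case True then show ?thesis unfolding pi by (simp add: nth_append)
    next
      case False
      show ?thesis
      proof (cases "i = length P")
        case True then show ?thesis unfolding pi by (simp add: nth_append)
      next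
        case False2: False
        then obtain j where j: "i = Suc (length P + j)" using False
          by (metis add_Suc_right less_imp_Suc_add nat_neq_iff)
        show ?thesis unfolding pi j by (simp add: nth_append is_S_def)
      qed
    qed
  qed
  show ?thesis unfolding area_def areaP_def set_eq l_def[symmetric]
  proof (rule sum.cong)
    fix i assume "i \<in> {i. i \<le> length P \<and> is_S ((P @ [S l]) ! i)}"
    then have i: "i \<le> length P" by simp
    then have "take i (fP as x P) = take i P" unfolding pi by simp
    then show "nat (rank_of (as @ [x]) (take i (fP as x P))) = nat (rank_of as (take i P))"
      using rank_take_P[of P as x i] F l_def by simp
  qed simp
qed

lemma fill_same:
  assumes P: "P \<in> Pref as" and b: "b > 0"
  shows "1 \<le> t \<Longrightarrow> t \<le> Suc (length P) \<Longrightarrow>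
    fill (as @ [c]) (take t (P @ [S (length as)])) = fill (as @ [b]) (take t (P @ [S (length as)]))"
proof (induction t rule: nat_induct_at_least)
  case base
  have "take 1 (P @ [S (length as)]) = [(P @ [S (length as)]) ! 0]" by (cases P) auto
  then show ?case by (simp add: fill_single)
next
  case (Suc t)
  define u where "u = P @ [S (length as)]"
  define l where "l = length as"
  have IH: "fill (as @ [c]) (take t u) = fill (as @ [b]) (take t u)" using Suc u_def by simp
  have "t < length u" using Suc by (simp add: u_def)
  then have tk: "take (Suc t) u = take t u @ [u ! t]" by (rule take_Suc_conv_app_nth)
  have ne: "take t u \<noteq> []" using Suc by (auto simp: u_def)
  have lt: "length (take t u) = t" using Suc by (simp add: u_def)
  have fs: "fill k (take (Suc t) u) = fill_step k (fill k (take t u)) (Suc t, u ! t)" for k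
    using fill_snoc[OF ne] tk lt by simp
  have "fill_step (as @ [c]) (fill (as @ [b]) (take t u)) (Suc t, u ! t)
      = fill_step (as @ [b]) (fill (as @ [b]) (take t u)) (Suc t, u ! t)"
  proof (cases "u ! t")
    case (S j) then show ?thesis by simp
  next
    case W
    define T where "T = fill (as @ [b]) (take t u)"
    have tP: "t < length P"
    proof (rule ccontr)
      assume "\<not> t < length P"
      then have "t = length P" using Suc by simp
      then show False using W by (simp add: u_def)
    qed
    define \<pi> where "\<pi> = fP as b P"
    have D: "\<pi> \<in> dyck_paths (as @ [b])" using fP_in[OF P] \<pi>_def by simp
    have tpi: "take t \<pi> = take t u" using tP by (simp add: \<pi>_def fP_def u_def)
    have "t < length \<pi>" using tP by (simp add: \<pi>_def fP_def)
    then have I: "finv (as @ [b]) (take t u) T"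
      using inv_path[OF D Suc.hyps] tpi T_def by simp
    have "length (filter is_S (take t u)) \<le> l"
    proof -
      have "take t u = take t P" using tP by (simp add: u_def)
      then show ?thesis using filt_take_len[of is_S t P] P by (simp add: Pref_def l_def)
    qed
    moreover have "\<forall>j<Suc l. (T ! j \<noteq> []) = (j < length (filter is_S (take t u)))"
      using I by (simp add: finv_def l_def)
    ultimately have Tl: "T ! l = []" by (meson lessI not_le)
    have "active_cols (as @ [c]) T = active_cols (as @ [b]) T"
      unfolding active_cols_def using Tl
      by (auto simp: nth_append l_def less_Suc_eq)
    then show ?thesis unfolding T_def[symmetric] W by (simp add: Let_def)
  qed
  then show ?case using fs[of "as @ [c]"] fs[of "as @ [b]"] IH u_def by simp
qed

lemma depth_fP:
  assumes P: "P \<in> Pref as" and b: "b > 0" and c: "c > 0"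
  shows "depth (as @ [b]) (fP as b P) = depth (as @ [c]) (fP as c P)"
proof -
  define l where "l = length as"
  define u where "u = P @ [S l]"
  have Pu: "fP as x P = u @ replicate (sum_list as + x - nW P) W" for x
    by (simp add: fP_def u_def l_def)
  define T0 where "T0 = fill (as @ [b]) u"
  have same: "fill (as @ [c]) u = T0"
    using fill_same[OF P b, of "Suc (length P)" c] unfolding T0_def u_def l_def by simp
  have nWle: "nW P \<le> sum_list as" using P by (simp add: Pref_def)
  have D: "fP as b P \<in> dyck_paths (as @ [b])" by (rule fP_in[OF P])
  have tk: "take (length u) (fP as b P) = u" unfolding Pu by simp
  have lu: "length u < length (fP as b P)" unfolding Pu using nWle b by simp
  have I: "finv (as @ [b]) u T0"
    using inv_path[OF D _ lu] tk T0_def by (simp add: u_def)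
  have FP: "filter is_S P = map S [0..<l]" using P by (simp add: Pref_def l_def)
  have Fu: "length (filter is_S u) = Suc l" using FP by (simp add: u_def is_S_def)
  have L: "length T0 = Suc l" using I by (simp add: finv_def l_def)
  have NE: "\<forall>j<Suc l. T0 ! j \<noteq> []" using I Fu by (simp add: finv_def l_def)
  have LE: "\<forall>j<Suc l. \<forall>x\<in>set (T0 ! j). x \<le> length u" using I by (simp add: finv_def l_def)
  have une: "u \<noteq> []" by (simp add: u_def)
  have E1: "ext_by (length u) T0 (fill (as @ [b]) (fP as b P))"
    unfolding Pu T0_def by (rule ext_suffix[OF une])
  have E2: "ext_by (length u) T0 (fill (as @ [c]) (fP as c P))"
    unfolding Pu using ext_suffix[OF une, of "as @ [c]"] same by simp
  have "col_ranks (fill (as @ [b]) (fP as b P)) (Suc l) = col_ranks (fill (as @ [c]) (fP as c P)) (Suc l)"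
    by (rule col_ranks_ext[OF L NE LE E1 E2]) simp
  then show ?thesis unfolding depth_def by (simp add: l_def)
qed

theorem proposition5p3:
  fixes as :: "nat list" and b c :: nat
  assumes "length as \<ge> 1"
    and "\<forall>a\<in>set as. a > 0"
    and "b > 0" and "c > 0"
  shows "Ctilde (as @ [b]) = Ctilde (as @ [c])"
proof -
  have e: "Ctilde (as @ [x]) = (\<Sum>P\<in>Pref as. monom (monom 1 (depth (as @ [x]) (fP as x P))) (area (as @ [x]) (fP as x P)))" for x
    unfolding Ctilde_def dyck_char by (subst sum.reindex[OF fP_inj]) (simp add: o_def)
  show ?thesis unfolding e
    by (rule sum.cong) (simp_all add: area_fP depth_fP[OF _ assms(3,4)])
qed

end
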